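(* In the D-RR setting under the strongly convex assumptions, suppose that for all $t$ $$\alpha_t\le\sqrt{\frac{2-\rho_w^2}{24\rho_w^2(5-\rho_w^2)}}\,\frac{1-\rho_w^2}{L}$$ (the right-hand side being $+\infty$ if $\rho_w=0$). Then for all $t\ge0$ and $\ell\in\{0,\dots,m-1\}$, $$\mathbb{E}\|\mathbf{x}_t^{\ell+1}-\mathbf 1(\bar x_t^{\ell+1})^\intercal\|^2\le\frac{1+\rho_w^2}{2}\mathbb{E}\|\mathbf{x}_t^{\ell}-\mathbf 1(\bar x_t^{\ell})^\intercal\|^2+\frac{30\alpha_t^2nL^2}{1-\rho_w^2}\mathbb{E}\|\bar x_t^\ell-\bar x_*^\ell\|^2+\frac{15n\rho_w^2\alpha_t^2}{1-\rho_w^2}\big(\sigma_*^2+2L\sigma^2_{\mathrm{shuffle}}\big).$$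
   Context: D-RR setting. Let $n,m,p\ge1$ be integers and $[k]=\{1,\dots,k\}$. For $i\in[n]$, $\ell\in[m]$ let $f_{i,\ell}:\mathbb{R}^p\to\mathbb{R}$ be differentiable; $f_i:=\frac1m\sum_{\ell=1}^m f_{i,\ell}$, $f:=\frac1n\sum_{i=1}^n f_i$. Let $W=(w_{ij})\in\mathbb{R}^{n\times n}$ be nonnegative, symmetric, with $W\mathbf 1=\mathbf 1$, compliant with an undirected connected graph on $[n]$ (for $i\ne j$, $w_{ij}>0$ iff $\{i,j\}$ is an edge); $\rho_w$ is the spectral norm of $W-\frac1n\mathbf 1\mathbf 1^\intercal$ (so $\rho_w<1$). The D-RR algorithm: given deterministic initial points $x_{i,0}\in\mathbb{R}^p$ and stepsizes $\alpha_t>0$, at each epoch $t=0,1,\dots$ each agent $i$ draws a permutation $(\pi^i_0,\dots,\pi^i_{m-1})$ of $[m]$ uniformly at random, independently across agents and epochs; sets $x^0_{i,t}=x_{i,t}$; for $\ell=0,\dots,m-1$ sets $x^{\ell+1}_{i,t}=\sum_{j=1}^n w_{ij}\big(x^\ell_{j,t}-\alpha_t\nabla f_{j,\pi^j_\ell}(x^\ell_{j,t})\big)$; sets $x_{i,t+1}=x^m_{i,t}$. Notation: $\mathbf{x}_t^\ell\in\mathbb{R}^{n\times p}$ has $i$-th row $(x^\ell_{i,t})^\intercal$; $\bar x_t^\ell=\frac1n\sum_i x^\ell_{i,t}$; $\mathbf 1(\bar x_t^\ell)^\intercal$ is the $n\times p$ matrix all of whose rows equal $(\bar x_t^\ell)^\intercal$;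 $\|\cdot\|$ is Euclidean/Frobenius norm; $\mathbb{E}$ is expectation over all permutations. Strongly convex assumptions: each $f_{i,\ell}$ is $\mu$-strongly convex with $L$-Lipschitz gradient ($0<\mu\le L$); $x^*$ is the unique minimizer of $f$; $\sigma_*^2:=\frac{1}{mn}\sum_{i,\ell}\|\nabla f_{i,\ell}(x^* )\|^2$. For epoch $t$ define $\bar x_*^\ell:=x^*-\alpha_t\sum_{k=0}^{\ell-1}\frac1n\sum_{i=1}^n\nabla f_{i,\pi^i_k}(x^* )$ ($\ell=0,\dots,m$), $\bar s_\ell:=\frac1n\sum_i f_{i,\pi^i_\ell}$, and $\sigma^2_{\mathrm{shuffle}}:=\max_{\ell=0,\dots,m-1}\mathbb{E}\big[\bar s_\ell(\bar x_*^\ell)-\bar s_\ell(x^* )-\langle\nabla\bar s_\ell(x^* ),\bar x_*^\ell-x^*\rangle\big]$. *)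

theory Defs
  imports "HOL-Analysis.Analysis" "HOL-Probability.Probability"
begin

definition spectral_norm :: "real ^'n ^'n \<Rightarrow> real" where
  "spectral_norm M = onorm (\<lambda>v. M *v v)"

definition rho_w :: "real ^'n::finite ^'n \<Rightarrow> real" where
  "rho_w W = spectral_norm (W - (\<chi> i j. 1 / real CARD('n)))"

text \<open>W is a nonnegative, symmetric, row-stochastic matrix compliant with an undirected
  connected graph: the graph is the one with edges {i,j} (i \<noteq> j) exactly when w_ij > 0,
  and this graph must be connected.\<close>
definition mixing_matrix :: "real ^'n::finite ^'n \<Rightarrow> bool" where
  "mixing_matrix W \<longleftrightarrow>
     (\<forall>i j. 0 \<le> W $ i $ j) \<and> transpose W = W \<and> W *v (vec 1) = vec 1 \<and>
     (\<forall>i j. (i, j) \<in> {(a, b). a \<noteq> b \<and> 0 < W $ a $ b}\<^sup>*)"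

definition strongly_convex_on :: "real \<Rightarrow> ('a::real_normed_vector \<Rightarrow> real) \<Rightarrow> bool" where
  "strongly_convex_on \<mu> f \<longleftrightarrow>
     (\<forall>x y. \<forall>u::real. 0 \<le> u \<and> u \<le> 1 \<longrightarrow>
        f (u *\<^sub>R x + (1 - u) *\<^sub>R y) \<le> u * f x + (1 - u) * f y - \<mu> / 2 * u * (1 - u) * (norm (x - y))\<^sup>2)"

text \<open>Agents are the elements of the finite type 'n; component functions are indexed by
  l \<in> {..<m} (i.e. 0-based: index l stands for l+1 in [m]). g i l is the gradient of f_{i,l}.
  A permutation of agent i in an epoch is a function P i :: nat \<Rightarrow> nat permuting {..<m};
  pi^i_ell = P i ell.\<close>

definition drr_step ::
  "real ^'n::finite ^'n \<Rightarrow> ('n \<Rightarrow> nat \<Rightarrow> 'a::real_vector \<Rightarrow> 'a) \<Rightarrow> real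
     \<Rightarrow> ('n \<Rightarrow> nat \<Rightarrow> nat) \<Rightarrow> nat \<Rightarrow> ('n \<Rightarrow> 'a) \<Rightarrow> ('n \<Rightarrow> 'a)" where
  "drr_step W g \<alpha> P r X = (\<lambda>i. \<Sum>j\<in>UNIV. W $ i $ j *\<^sub>R (X j - \<alpha> *\<^sub>R g j (P j r) (X j)))"

text \<open>Inner iterate: drr_inner W g alpha P X ell = x^ell_t when X = x_t.\<close>
primrec drr_inner ::
  "real ^'n::finite ^'n \<Rightarrow> ('n \<Rightarrow> nat \<Rightarrow> 'a::real_vector \<Rightarrow> 'a) \<Rightarrow> real
     \<Rightarrow> ('n \<Rightarrow> nat \<Rightarrow> nat) \<Rightarrow> ('n \<Rightarrow> 'a) \<Rightarrow> nat \<Rightarrow> ('n \<Rightarrow> 'a)" where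
  "drr_inner W g \<alpha> P X 0 = X"
| "drr_inner W g \<alpha> P X (Suc r) = drr_step W g \<alpha> P r (drr_inner W g \<alpha> P X r)"

primrec drr_outer ::
  "real ^'n::finite ^'n \<Rightarrow> ('n \<Rightarrow> nat \<Rightarrow> 'a::real_vector \<Rightarrow> 'a) \<Rightarrow> nat \<Rightarrow> (nat \<Rightarrow> real)
     \<Rightarrow> (nat \<Rightarrow> 'n \<Rightarrow> nat \<Rightarrow> nat) \<Rightarrow> ('n \<Rightarrow> 'a) \<Rightarrow> nat \<Rightarrow> ('n \<Rightarrow> 'a)" where
  "drr_outer W g m \<alpha> \<omega> x0 0 = x0"
| "drr_outer W g m \<alpha> \<omega> x0 (Suc t) = drr_inner W g (\<alpha> t) (\<omega> t) (drr_outer W g m \<alpha> \<omega> x0 t) m"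

definition drr_iter ::
  "real ^'n::finite ^'n \<Rightarrow> ('n \<Rightarrow> nat \<Rightarrow> 'a::real_vector \<Rightarrow> 'a) \<Rightarrow> nat \<Rightarrow> (nat \<Rightarrow> real)
     \<Rightarrow> ('n \<Rightarrow> 'a) \<Rightarrow> (nat \<Rightarrow> 'n \<Rightarrow> nat \<Rightarrow> nat) \<Rightarrow> nat \<Rightarrow> nat \<Rightarrow> ('n \<Rightarrow> 'a)" where
  "drr_iter W g m \<alpha> x0 \<omega> t r = drr_inner W g (\<alpha> t) (\<omega> t) (drr_outer W g m \<alpha> \<omega> x0 t) r"

definition agent_avg :: "('n::finite \<Rightarrow> 'a::real_vector) \<Rightarrow> 'a" where
  "agent_avg X = (1 / real CARD('n)) *\<^sub>R (\<Sum>i\<in>UNIV. X i)"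

text \<open>Squared Frobenius norm of x - 1 xbar^T.\<close>
definition consensus_err :: "('n::finite \<Rightarrow> 'a::real_normed_vector) \<Rightarrow> real" where
  "consensus_err X = (\<Sum>i\<in>UNIV. (norm (X i - agent_avg X))\<^sup>2)"

text \<open>The uniform distribution on this finite set is exactly independent uniform
  permutations across agents and epochs; later epochs do not influence epoch-t quantities.\<close>
definition perm_space :: "nat \<Rightarrow> nat \<Rightarrow> (nat \<Rightarrow> 'n \<Rightarrow> nat \<Rightarrow> nat) set" where
  "perm_space m t = PiE {..t} (\<lambda>_. PiE UNIV (\<lambda>_. {\<sigma>. \<sigma> permutes {..<m}}))"

definition Exp :: "nat \<Rightarrow> nat \<Rightarrow> ((nat \<Rightarrow> 'n \<Rightarrow> nat \<Rightarrow> nat) \<Rightarrow> real) \<Rightarrow> real" where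
  "Exp m t X = measure_pmf.expectation (pmf_of_set (perm_space m t)) X"

definition xbar_star ::
  "('n::finite \<Rightarrow> nat \<Rightarrow> 'a::real_vector \<Rightarrow> 'a) \<Rightarrow> 'a \<Rightarrow> real \<Rightarrow> ('n \<Rightarrow> nat \<Rightarrow> nat) \<Rightarrow> nat \<Rightarrow> 'a" where
  "xbar_star g xs \<alpha> P r =
     xs - \<alpha> *\<^sub>R (\<Sum>k<r. (1 / real CARD('n)) *\<^sub>R (\<Sum>i\<in>UNIV. g i (P i k) xs))"

definition shuffle_breg ::
  "('n::finite \<Rightarrow> nat \<Rightarrow> 'a::real_inner \<Rightarrow> real) \<Rightarrow> ('n \<Rightarrow> nat \<Rightarrow> 'a \<Rightarrow> 'a) \<Rightarrow> 'a \<Rightarrow> real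
     \<Rightarrow> ('n \<Rightarrow> nat \<Rightarrow> nat) \<Rightarrow> nat \<Rightarrow> real" where
  "shuffle_breg f g xs \<alpha> P r =
     (let sbar = (\<lambda>x. (1 / real CARD('n)) * (\<Sum>i\<in>UNIV. f i (P i r) x));
          gbar = (1 / real CARD('n)) *\<^sub>R (\<Sum>i\<in>UNIV. g i (P i r) xs);
          y = xbar_star g xs \<alpha> P r
      in sbar y - sbar xs - inner gbar (y - xs))"

definition sigma_shuffle_sq ::
  "('n::finite \<Rightarrow> nat \<Rightarrow> 'a::real_inner \<Rightarrow> real) \<Rightarrow> ('n \<Rightarrow> nat \<Rightarrow> 'a \<Rightarrow> 'a) \<Rightarrow> nat \<Rightarrow> 'a
     \<Rightarrow> (nat \<Rightarrow> real) \<Rightarrow> nat \<Rightarrow> real" where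
  "sigma_shuffle_sq f g m xs \<alpha> t =
     Max ((\<lambda>r. Exp m t (\<lambda>\<omega>. shuffle_breg f g xs (\<alpha> t) (\<omega> t) r)) ` {..<m})"

definition sigma_star_sq ::
  "('n::finite \<Rightarrow> nat \<Rightarrow> 'a \<Rightarrow> 'a::real_normed_vector) \<Rightarrow> nat \<Rightarrow> 'a \<Rightarrow> real" where
  "sigma_star_sq g m xs = (1 / (real m * real CARD('n))) * (\<Sum>i\<in>UNIV. \<Sum>l<m. (norm (g i l xs))\<^sup>2)"

end

theory Submission
  imports Defs
begin


lemma line_deriv:
  fixes h :: "'a::euclidean_space \<Rightarrow> real"
  assumes "\<And>x. (h has_derivative (\<lambda>v. inner (G x) v)) (at x)"
  shows "((\<lambda>s. h (y + s *\<^sub>R d)) has_real_derivative inner (G (y + s *\<^sub>R d)) d) (at s)"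
proof -
  have l: "((\<lambda>s. y + s *\<^sub>R d) has_derivative (\<lambda>s. s *\<^sub>R d)) (at s)"
    by (auto intro!: derivative_eq_intros)
  have "((\<lambda>s. h (y + s *\<^sub>R d)) has_derivative (\<lambda>u. inner (G (y + s *\<^sub>R d)) (u *\<^sub>R d))) (at s)"
    using has_derivative_compose[OF l assms] by simp
  moreover have "(\<lambda>u. inner (G (y + s *\<^sub>R d)) (u *\<^sub>R d)) = (*) (inner (G (y + s *\<^sub>R d)) d)"
    by (auto simp: fun_eq_iff)
  ultimately show ?thesis by (simp add: has_field_derivative_def)
qed

lemma tangent_ineq:
  fixes f :: "'a::euclidean_space \<Rightarrow> real"
  assumes der: "\<And>x. (f has_derivative (\<lambda>v. inner (G x) v)) (at x)" and cv: "convex_on UNIV f"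
  shows "f x + inner (G x) (y - x) \<le> f y"
proof -
  define d where "d = y - x"
  define \<phi> where "\<phi> = (\<lambda>s::real. f (x + s *\<^sub>R d))"
  have "convex_on UNIV \<phi>"
    unfolding convex_on_def \<phi>_def
  proof (intro conjI ballI allI impI)
    fix a b u v :: real assume uv: "0 \<le> u" "0 \<le> v" "u + v = 1"
    have "x + (u * a + v * b) *\<^sub>R d = u *\<^sub>R (x + a *\<^sub>R d) + v *\<^sub>R (x + b *\<^sub>R d)"
      using uv by (simp add: algebra_simps scaleR_add_left[symmetric] del: scaleR_add_left)
    then show "f (x + (u *\<^sub>R a + v *\<^sub>R b) *\<^sub>R d) \<le> u * f (x + a *\<^sub>R d) + v * f (x + b *\<^sub>R d)"
      using cv uv unfolding convex_on_def by auto
  qed simp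
  moreover have "(\<phi> has_field_derivative inner (G x) d) (at 0 within UNIV)"
    using line_deriv[OF der, of x d 0] unfolding \<phi>_def by simp
  ultimately have "\<phi> 1 - \<phi> 0 \<ge> inner (G x) d * (1 - 0)"
    by (intro convex_on_imp_above_tangent) auto
  then show ?thesis unfolding \<phi>_def d_def by simp
qed

lemma descent:
  fixes h :: "'a::euclidean_space \<Rightarrow> real"
  assumes der: "\<And>x. (h has_derivative (\<lambda>v. inner (G x) v)) (at x)"
    and lip: "L-lipschitz_on UNIV G"
  shows "h (y + d) \<le> h y + inner (G y) d + L / 2 * (norm d)\<^sup>2"
proof -
  define \<psi> where "\<psi> = (\<lambda>s. h (y + s *\<^sub>R d) - h y - s * inner (G y) d - L / 2 * s\<^sup>2 * (norm d)\<^sup>2)"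
  have "\<psi> 1 \<le> \<psi> 0"
  proof (rule DERIV_nonpos_imp_nonincreasing[of 0 1])
    fix s :: real assume s: "0 \<le> s" "s \<le> 1"
    have D: "(\<psi> has_real_derivative (inner (G (y + s *\<^sub>R d)) d - inner (G y) d - L * s * (norm d)\<^sup>2)) (at s)"
      unfolding \<psi>_def
      by (rule derivative_eq_intros line_deriv[OF der] refl | simp)+
    have "inner (G (y + s *\<^sub>R d)) d - inner (G y) d = inner (G (y + s *\<^sub>R d) - G y) d"
      by (simp add: inner_diff_left)
    also have "\<dots> \<le> norm (G (y + s *\<^sub>R d) - G y) * norm d" by (rule norm_cauchy_schwarz)
    also have "norm (G (y + s *\<^sub>R d) - G y) \<le> L * norm (s *\<^sub>R d)"
      using lipschitz_onD[OF lip, of "y + s *\<^sub>R d" y] by (simp add: dist_norm)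
    hence "norm (G (y + s *\<^sub>R d) - G y) * norm d \<le> L * norm (s *\<^sub>R d) * norm d"
      by (simp add: mult_right_mono)
    also have "\<dots> = L * s * (norm d)\<^sup>2" using s by (simp add: power2_eq_square)
    finally show "\<exists>y. (\<psi> has_real_derivative y) (at s) \<and> y \<le> 0" using D by auto
  qed simp
  then show ?thesis unfolding \<psi>_def by simp
qed

lemma cocoercive:
  fixes f :: "'a::euclidean_space \<Rightarrow> real"
  assumes der: "\<And>x. (f has_derivative (\<lambda>v. inner (G x) v)) (at x)" and cv: "convex_on UNIV f"
    and lip: "L-lipschitz_on UNIV G" and L: "0 < L"
  shows "(norm (G y - G x))\<^sup>2 \<le> 2 * L * (f y - f x - inner (G x) (y - x))"
proof -
  define h where "h = (\<lambda>z. f z - f x - inner (G x) (z - x))"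
  have hder: "(h has_derivative (\<lambda>v. inner (G z - G x) v)) (at z)" for z
    unfolding h_def
    by (rule derivative_eq_intros der refl | simp add: inner_diff_left)+
  have hlip: "L-lipschitz_on UNIV (\<lambda>z. G z - G x)"
    using lip by (simp add: lipschitz_on_def dist_norm)
  have hpos: "0 \<le> h z" for z using tangent_ineq[OF der cv, of x z] by (simp add: h_def)
  define H where "H = G y - G x"
  have "h (y + (- (1/L)) *\<^sub>R H) \<le> h y + inner H ((- (1/L)) *\<^sub>R H) + L / 2 * (norm ((- (1/L)) *\<^sub>R H))\<^sup>2"
    using descent[OF hder hlip, of y "(- (1/L)) *\<^sub>R H"] by (simp add: H_def)
  also have "\<dots> = h y - (norm H)\<^sup>2 / (2 * L)"
    using L by (simp add: power2_eq_square inner_commute power_mult_distrib field_simps)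
      (simp add: power2_norm_eq_inner[symmetric] power2_eq_square)
  finally have "(norm H)\<^sup>2 / (2 * L) \<le> h y" using hpos[of "y + (- (1/L)) *\<^sub>R H"] by linarith
  then show ?thesis using L by (simp add: H_def h_def field_simps)
qed




lemma norm_sq_basis: "(norm (z::'a::euclidean_space))\<^sup>2 = (\<Sum>b\<in>Basis. (z \<bullet> b)\<^sup>2)"
  by (simp only: power2_norm_eq_inner euclidean_inner[of z z]) (simp add: power2_eq_square)

lemma norm_sq_vec: "(norm (v::real^'n))\<^sup>2 = (\<Sum>i\<in>UNIV. (v $ i)\<^sup>2)"
  by (simp only: power2_norm_eq_inner inner_vec_def) (simp add: power2_eq_square)

lemma mat_sum_bound:
  fixes M :: "real^'n^'n" and Z :: "'n \<Rightarrow> 'a::euclidean_space"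
  shows "(\<Sum>i\<in>UNIV. (norm (\<Sum>j\<in>UNIV. M$i$j *\<^sub>R Z j))\<^sup>2)
          \<le> (onorm (\<lambda>v. M *v v))\<^sup>2 * (\<Sum>j\<in>UNIV. (norm (Z j))\<^sup>2)"
proof -
  define on where "on = onorm (\<lambda>v. M *v v)"
  have o0: "0 \<le> on" unfolding on_def by (rule onorm_pos_le) simp
  define V where "V b = (\<chi> j. Z j \<bullet> b)" for b
  have "(\<Sum>i\<in>UNIV. (norm (\<Sum>j\<in>UNIV. M$i$j *\<^sub>R Z j))\<^sup>2)
      = (\<Sum>i\<in>UNIV. \<Sum>b\<in>Basis. ((M *v V b) $ i)\<^sup>2)"
    by (simp add: norm_sq_basis inner_sum_left V_def matrix_vector_mult_def)
  also have "\<dots> = (\<Sum>b\<in>Basis. (norm (M *v V b))\<^sup>2)"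
    by (subst sum.swap) (simp add: norm_sq_vec)
  also have "\<dots> \<le> (\<Sum>b\<in>Basis. on\<^sup>2 * (norm (V b))\<^sup>2)"
  proof (rule sum_mono)
    fix b :: 'a
    have "norm (M *v V b) \<le> on * norm (V b)" unfolding on_def by (rule onorm) simp
    then show "(norm (M *v V b))\<^sup>2 \<le> on\<^sup>2 * (norm (V b))\<^sup>2"
      by (metis norm_ge_zero power_mono power_mult_distrib)
  qed
  also have "\<dots> = on\<^sup>2 * (\<Sum>j\<in>UNIV. (norm (Z j))\<^sup>2)"
    using sum.swap[of "\<lambda>b j. (Z j \<bullet> b)\<^sup>2" UNIV Basis]
    by (simp add: sum_distrib_left[symmetric] norm_sq_vec V_def norm_sq_basis[of "Z _"])
  finally show ?thesis unfolding on_def .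
qed

lemma jensen_sq:
  fixes w u :: "'n \<Rightarrow> real"
  assumes "finite A" "\<And>j. j \<in> A \<Longrightarrow> 0 \<le> w j" "(\<Sum>j\<in>A. w j) = 1"
  shows "(\<Sum>j\<in>A. w j * u j)\<^sup>2 \<le> (\<Sum>j\<in>A. w j * (u j)\<^sup>2)"
proof -
  define c where "c = (\<Sum>j\<in>A. w j * u j)"
  have "0 \<le> (\<Sum>j\<in>A. w j * (u j - c)\<^sup>2)" using assms by (intro sum_nonneg) auto
  also have "\<dots> = (\<Sum>j\<in>A. w j * (u j)\<^sup>2) - 2 * c * (\<Sum>j\<in>A. w j * u j) + c\<^sup>2 * (\<Sum>j\<in>A. w j)"
    by (simp add: power2_eq_square algebra_simps sum.distrib sum_subtractf sum_distrib_left)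
  finally show ?thesis using assms(3) by (simp add: c_def power2_eq_square)
qed


lemma mixing_props:
  fixes W :: "real^'n::finite^'n"
  assumes "mixing_matrix W"
  shows "\<And>i j. 0 \<le> W$i$j" "\<And>i j. W$i$j = W$j$i" "\<And>i. (\<Sum>j\<in>UNIV. W$i$j) = 1"
    "\<And>j. (\<Sum>i\<in>UNIV. W$i$j) = 1"
proof -
  show 0: "\<And>i j. 0 \<le> W$i$j" using assms by (simp add: mixing_matrix_def)
  show s: "\<And>i j. W$i$j = W$j$i"
  proof -
    fix i j
    have "transpose W $ i $ j = W $ i $ j" using assms by (simp add: mixing_matrix_def)
    then show "W$i$j = W$j$i" by (simp add: transpose_def)
  qed
  show r: "\<And>i. (\<Sum>j\<in>UNIV. W$i$j) = 1"
  proof -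
    fix i
    have "(W *v vec 1) $ i = vec 1 $ i" using assms by (simp add: mixing_matrix_def)
    then show "(\<Sum>j\<in>UNIV. W$i$j) = 1" by (simp add: matrix_vector_mult_def)
  qed
  show "\<And>j. (\<Sum>i\<in>UNIV. W$i$j) = 1" using r s by simp
qed

lemma rho_bounds:
  fixes W :: "real^'n::finite^'n"
  assumes W: "mixing_matrix W"
  shows "0 \<le> rho_w W" "rho_w W \<le> 1"
proof -
  define J :: "real^'n^'n" where "J = (\<chi> i j. 1 / real CARD('n))"
  show "0 \<le> rho_w W" unfolding rho_w_def spectral_norm_def by (rule onorm_pos_le) simp
  show "rho_w W \<le> 1" unfolding rho_w_def spectral_norm_def
  proof (rule onorm_le)
    fix v :: "real^'n"
    define c where "c = (\<Sum>j\<in>UNIV. v$j) / real CARD('n)"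
    define u where "u j = v$j - c" for j
    have comp: "((W - (\<chi> i j. 1 / real CARD('n))) *v v) $ i = (\<Sum>j\<in>UNIV. W$i$j * u j)" for i
    proof -
      have "(\<Sum>j\<in>UNIV. W$i$j * u j) = (\<Sum>j\<in>UNIV. W$i$j * v$j) - c * (\<Sum>j\<in>UNIV. W$i$j)"
        by (simp add: u_def algebra_simps sum_subtractf sum_distrib_left)
      also have "\<dots> = (\<Sum>j\<in>UNIV. W$i$j * v$j) - c" using mixing_props(3)[OF W] by simp
      finally show ?thesis
        by (simp add: matrix_vector_mult_def c_def algebra_simps sum_subtractf sum_divide_distrib)
    qed
    have "(norm ((W - (\<chi> i j. 1 / real CARD('n))) *v v))\<^sup>2 = (\<Sum>i\<in>UNIV. (\<Sum>j\<in>UNIV. W$i$j * u j)\<^sup>2)"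
      by (simp add: norm_sq_vec comp)
    also have "\<dots> \<le> (\<Sum>i\<in>UNIV. \<Sum>j\<in>UNIV. W$i$j * (u j)\<^sup>2)"
      by (intro sum_mono jensen_sq) (auto simp: mixing_props[OF W])
    also have "\<dots> = (\<Sum>j\<in>UNIV. (u j)\<^sup>2 * (\<Sum>i\<in>UNIV. W$i$j))"
      by (subst sum.swap) (simp add: sum_distrib_left mult.commute)
    also have "\<dots> = (\<Sum>j\<in>UNIV. (u j)\<^sup>2)" by (simp add: mixing_props(4)[OF W])
    also have "\<dots> = (\<Sum>j\<in>UNIV. (v$j)\<^sup>2 - 2 * c * v$j + c\<^sup>2)"
      by (simp add: u_def power2_eq_square algebra_simps)
    also have "\<dots> = (\<Sum>j\<in>UNIV. (v$j)\<^sup>2) - 2 * c * (\<Sum>j\<in>UNIV. v$j) + real CARD('n) * c\<^sup>2"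
      by (simp add: sum.distrib sum_subtractf sum_distrib_left)
    also have "(\<Sum>j\<in>UNIV. v$j) = real CARD('n) * c" by (simp add: c_def)
    also have "(\<Sum>j\<in>UNIV. (v$j)\<^sup>2) - 2 * c * (real CARD('n) * c) + real CARD('n) * c\<^sup>2
       = (\<Sum>j\<in>UNIV. (v$j)\<^sup>2) - real CARD('n) * c\<^sup>2" by (simp add: power2_eq_square)
    also have "\<dots> \<le> (norm v)\<^sup>2" by (simp add: norm_sq_vec)
    finally have "(norm ((W - (\<chi> i j. 1 / real CARD('n))) *v v))\<^sup>2 \<le> (norm v)\<^sup>2" .
    then show "norm ((W - (\<chi> i j. 1 / real CARD('n))) *v v) \<le> 1 * norm v"
      using power2_le_imp_le by fastforce
  qed
qed




lemma perm_space_finite: "finite (perm_space m t :: (nat \<Rightarrow> 'n::finite \<Rightarrow> nat \<Rightarrow> nat) set)"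
  unfolding perm_space_def by (intro finite_PiE finite_permutations) auto

lemma perm_space_nonempty: "(perm_space m t :: (nat \<Rightarrow> 'n::finite \<Rightarrow> nat \<Rightarrow> nat) set) \<noteq> {}"
  unfolding perm_space_def by (auto simp: PiE_eq_empty_iff intro: permutes_id)

lemma perm_space_permutes:
  assumes "w \<in> perm_space m t"
  shows "w t j permutes {..<m}"
  using assms unfolding perm_space_def by (auto simp: PiE_iff)

lemma perm_space_upd:
  assumes "w \<in> perm_space m t" "sg permutes {..<m}"
  shows "w(t := (w t)(j := sg)) \<in> perm_space m t"
proof -
  have "w \<in> PiE {..t} (\<lambda>_. PiE UNIV (\<lambda>_. {sg. sg permutes {..<m}}))" using assms(1) by (simp add: perm_space_def)
  then have A: "\<And>i ia. i \<le> t \<Longrightarrow> w i ia permutes {..<m}" and E: "w \<in> extensional {..t}"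
    by (auto simp: PiE_iff)
  have "(w(t := (w t)(j := sg))) i ia permutes {..<m}" if "i \<le> t" for i ia
    using A[OF that] A[of t] assms(2) by (cases "i = t"; cases "ia = j") auto
  moreover have "w(t := (w t)(j := sg)) \<in> extensional {..t}"
    using E unfolding extensional_def by auto
  ultimately show ?thesis unfolding perm_space_def by (auto simp: PiE_iff simp del: fun_upd_apply)
qed

lemma marg_card:
  fixes j :: "'n::finite"
  assumes a: "a < m" and b: "b < m"
  shows "card {w\<in>(perm_space m t :: (nat \<Rightarrow> 'n \<Rightarrow> nat \<Rightarrow> nat) set). w t j r = a}
       \<le> card {w\<in>(perm_space m t :: (nat \<Rightarrow> 'n \<Rightarrow> nat \<Rightarrow> nat) set). w t j r = b}"
proof -
  define \<phi> :: "(nat \<Rightarrow> 'n \<Rightarrow> nat \<Rightarrow> nat) \<Rightarrow> _"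
    where "\<phi> w = w(t := (w t)(j := Transposition.transpose a b \<circ> w t j))" for w
  have inv: "\<phi> (\<phi> w) = w" for w
  proof -
    have "\<phi> (\<phi> w) = w(t := (w t)(j := Transposition.transpose a b \<circ> (Transposition.transpose a b \<circ> w t j)))"
      by (simp add: \<phi>_def)
    also have "\<dots> = w" by (simp only: comp_assoc[symmetric] transpose_comp_involutory id_comp fun_upd_triv)
    finally show ?thesis .
  qed
  show ?thesis
  proof (rule card_inj_on_le)
    show "inj_on \<phi> {w\<in>perm_space m t. w t j r = a}" by (rule inj_on_inverseI[where g=\<phi>]) (rule inv)
    show "finite {w\<in>(perm_space m t :: (nat \<Rightarrow> 'n \<Rightarrow> nat \<Rightarrow> nat) set). w t j r = b}"
      by (rule finite_subset[OF _ perm_space_finite]) auto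
    show "\<phi> ` {w\<in>perm_space m t. w t j r = a} \<subseteq> {w\<in>perm_space m t. w t j r = b}"
    proof (rule image_subsetI)
      fix w assume "w \<in> {w\<in>perm_space m t. w t j r = a}"
      then have w: "w \<in> perm_space m t" "w t j r = a" by auto
      have "Transposition.transpose a b \<circ> w t j permutes {..<m}"
        using a b perm_space_permutes[OF w(1)] by (intro permutes_compose permutes_swap_id) auto
      then have "\<phi> w \<in> perm_space m t" unfolding \<phi>_def by (rule perm_space_upd[OF w(1)])
      moreover have "\<phi> w t j r = b" using w(2) by (simp add: \<phi>_def)
      ultimately show "\<phi> w \<in> {w\<in>perm_space m t. w t j r = b}" by simp
    qed
  qed
qed

lemma marg_uniform:
  fixes F :: "nat \<Rightarrow> real" and j :: "'n::finite"
  assumes "r < m"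
  shows "(\<Sum>w\<in>(perm_space m t :: (nat \<Rightarrow> 'n \<Rightarrow> nat \<Rightarrow> nat) set). F (w t j r))
       = real (card (perm_space m t :: (nat \<Rightarrow> 'n \<Rightarrow> nat \<Rightarrow> nat) set)) / real m * (\<Sum>l<m. F l)"
proof -
  define S where "S = (perm_space m t :: (nat \<Rightarrow> 'n \<Rightarrow> nat \<Rightarrow> nat) set)"
  define k where "k = card {w\<in>S. w t j r = 0}"
  have fS: "finite S" unfolding S_def by (rule perm_space_finite)
  have m0: "0 < m" using assms by simp
  have ck: "card {w\<in>S. w t j r = l} = k" if "l < m" for l
    using marg_card[of l m 0 t j r] marg_card[of 0 m l t j r] that m0 unfolding k_def S_def
    by (simp add: Collect_conj_eq)
  have img: "(\<lambda>w. w t j r) ` S \<subseteq> {..<m}"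
  proof
    fix x assume "x \<in> (\<lambda>w. w t j r) ` S"
    then obtain w where w: "w \<in> S" "x = w t j r" by auto
    have "w t j permutes {..<m}" using w(1) unfolding S_def by (rule perm_space_permutes)
    then show "x \<in> {..<m}" using permutes_in_image[of "w t j" "{..<m}" r] assms w(2) by simp
  qed
  have "(\<Sum>w\<in>S. F (w t j r)) = (\<Sum>l<m. \<Sum>w\<in>{w\<in>S. w t j r = l}. F (w t j r))"
    by (rule sum.group[OF fS _ img, symmetric]) simp
  also have "\<dots> = (\<Sum>l<m. real k * F l)" by (intro sum.cong refl) (simp add: ck)
  finally have 1: "(\<Sum>w\<in>S. F (w t j r)) = real k * (\<Sum>l<m. F l)" by (simp add: sum_distrib_left)
  have "real (card S) = (\<Sum>w\<in>S. (1::real))" by simp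
  also have "\<dots> = (\<Sum>l<m. \<Sum>w\<in>{w\<in>S. w t j r = l}. (1::real))"
    by (rule sum.group[OF fS _ img, symmetric]) simp
  also have "\<dots> = real m * real k" by (simp add: ck)
  finally show ?thesis using 1 m0 unfolding S_def[symmetric] by simp
qed


lemma step1:
  fixes W :: "real^'n::finite^'n" and X :: "'n \<Rightarrow> 'a::euclidean_space"
  assumes W: "mixing_matrix W"
  shows "consensus_err (drr_step W g a P r X)
     \<le> (rho_w W)\<^sup>2 * (\<Sum>j\<in>UNIV. (norm (X j - a *\<^sub>R g j (P j r) (X j) - agent_avg X))\<^sup>2)"
proof -
  define n where "n = real CARD('n)"
  have n0: "0 < n" unfolding n_def by simp
  define Y where "Y j = X j - a *\<^sub>R g j (P j r) (X j)" for j
  define xb where "xb = agent_avg X"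
  define M :: "real^'n^'n" where "M = W - (\<chi> i j. 1 / real CARD('n))"
  have X': "drr_step W g a P r X = (\<lambda>i. \<Sum>j\<in>UNIV. W$i$j *\<^sub>R Y j)"
    unfolding drr_step_def Y_def by simp
  have "(\<Sum>i\<in>UNIV. \<Sum>j\<in>UNIV. W$i$j *\<^sub>R Y j) = (\<Sum>j\<in>UNIV. (\<Sum>i\<in>UNIV. W$i$j) *\<^sub>R Y j)"
    by (subst sum.swap) (simp add: scaleR_sum_left)
  also have "\<dots> = (\<Sum>j\<in>UNIV. Y j)" by (simp add: mixing_props(4)[OF W])
  finally have avg: "agent_avg (\<lambda>i. \<Sum>j\<in>UNIV. W$i$j *\<^sub>R Y j) = (1 / n) *\<^sub>R (\<Sum>j\<in>UNIV. Y j)"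
    unfolding agent_avg_def n_def by simp
  have cst: "(\<Sum>j::'n\<in>UNIV. (1 / real CARD('n)) *\<^sub>R xb) = xb" by (simp add: sum_constant_scaleR)
  have comp: "(\<Sum>j\<in>UNIV. W$i$j *\<^sub>R Y j) - (1 / n) *\<^sub>R (\<Sum>j\<in>UNIV. Y j)
      = (\<Sum>j\<in>UNIV. M$i$j *\<^sub>R (Y j - xb))" for i
  proof -
    have "(\<Sum>j\<in>UNIV. M$i$j *\<^sub>R (Y j - xb))
       = (\<Sum>j\<in>UNIV. W$i$j *\<^sub>R Y j) - (\<Sum>j\<in>UNIV. W$i$j) *\<^sub>R xb
         - (1 / n) *\<^sub>R (\<Sum>j\<in>UNIV. Y j) + xb"
      using cst by (simp add: M_def n_def algebra_simps sum_subtractf sum.distrib scaleR_sum_left scaleR_sum_right)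
    also have "\<dots> = (\<Sum>j\<in>UNIV. W$i$j *\<^sub>R Y j) - (1 / n) *\<^sub>R (\<Sum>j\<in>UNIV. Y j)"
      using n0 by (simp add: mixing_props(3)[OF W])
    finally show ?thesis by simp
  qed
  have "consensus_err (drr_step W g a P r X) = (\<Sum>i\<in>UNIV. (norm (\<Sum>j\<in>UNIV. M$i$j *\<^sub>R (Y j - xb)))\<^sup>2)"
    unfolding consensus_err_def X' avg comp ..
  also have "\<dots> \<le> (onorm (\<lambda>v. M *v v))\<^sup>2 * (\<Sum>j\<in>UNIV. (norm (Y j - xb))\<^sup>2)"
    by (rule mat_sum_bound)
  also have "onorm (\<lambda>v. M *v v) = rho_w W" unfolding rho_w_def spectral_norm_def M_def ..
  finally show ?thesis unfolding Y_def xb_def .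
qed



lemma young:
  fixes u v :: "'a::real_inner"
  assumes "0 < e"
  shows "(norm (u - v))\<^sup>2 \<le> (1 + e) * (norm u)\<^sup>2 + (1 + 1 / e) * (norm v)\<^sup>2"
proof -
  have "0 \<le> (norm (e *\<^sub>R u + v))\<^sup>2" by simp
  also have "\<dots> = e\<^sup>2 * (norm u)\<^sup>2 + 2 * e * inner u v + (norm v)\<^sup>2"
    unfolding power2_norm_eq_inner by (simp add: inner_add_left inner_add_right inner_commute power2_eq_square algebra_simps)
  finally have "- 2 * inner u v \<le> e * (norm u)\<^sup>2 + (norm v)\<^sup>2 / e"
    using assms by (simp add: field_simps power2_eq_square)
  moreover have "(norm (u - v))\<^sup>2 = (norm u)\<^sup>2 - 2 * inner u v + (norm v)\<^sup>2"
    unfolding power2_norm_eq_inner by (simp add: inner_diff_left inner_diff_right inner_commute)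
  ultimately show ?thesis by (simp add: algebra_simps)
qed



lemma four_sq_real:
  fixes p q z w :: real
  shows "(p + q + z + w)\<^sup>2 \<le> 3 * p\<^sup>2 + 15/2 * q\<^sup>2 + 15/4 * z\<^sup>2 + 15/4 * w\<^sup>2"
proof -
  have e: "1280 * (3 * p\<^sup>2 + 15/2 * q\<^sup>2 + 15/4 * z\<^sup>2 + 15/4 * w\<^sup>2) - 1280 * (p + q + z + w)\<^sup>2
     = 8 * (8*p - 20*q)\<^sup>2 + 4 * (16*p - 20*z)\<^sup>2 + 4 * (16*p - 20*w)\<^sup>2
       + 10 * (16*q - 8*z)\<^sup>2 + 10 * (16*q - 8*w)\<^sup>2 + 5 * (16*z - 16*w)\<^sup>2"
    by algebra
  have "0 \<le> 8 * (8*p - 20*q)\<^sup>2 + 4 * (16*p - 20*z)\<^sup>2 + 4 * (16*p - 20*w)\<^sup>2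
       + 10 * (16*q - 8*z)\<^sup>2 + 10 * (16*q - 8*w)\<^sup>2 + 5 * (16*z - 16*w)\<^sup>2" by simp
  then show ?thesis using e by (smt (verit))
qed

lemma four_sq:
  fixes A B C D :: "'a::real_normed_vector"
  shows "(norm (A + B + C + D))\<^sup>2 \<le> 3 * (norm A)\<^sup>2 + 15/2 * (norm B)\<^sup>2 + 15/4 * (norm C)\<^sup>2 + 15/4 * (norm D)\<^sup>2"
proof -
  have "norm (A + B + C + D) \<le> norm A + norm B + norm C + norm D"
    using norm_triangle_ineq[of "A+B+C" D] norm_triangle_ineq[of "A+B" C] norm_triangle_ineq[of A B] by linarith
  then have "(norm (A + B + C + D))\<^sup>2 \<le> (norm A + norm B + norm C + norm D)\<^sup>2"
    by (simp add: power_mono)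
  also have "\<dots> \<le> 3 * (norm A)\<^sup>2 + 15/2 * (norm B)\<^sup>2 + 15/4 * (norm C)\<^sup>2 + 15/4 * (norm D)\<^sup>2"
    by (rule four_sq_real)
  finally show ?thesis .
qed


lemma lip_sq:
  assumes "L-lipschitz_on UNIV G" "0 \<le> L"
  shows "(norm (G x - G y))\<^sup>2 \<le> L\<^sup>2 * (norm (x - y))\<^sup>2"
proof -
  have "norm (G x - G y) \<le> L * norm (x - y)"
    using lipschitz_onD[OF assms(1), of x y] by (simp add: dist_norm)
  then have "(norm (G x - G y))\<^sup>2 \<le> (L * norm (x - y))\<^sup>2" by (simp add: power_mono)
  then show ?thesis by (simp add: power_mult_distrib)
qed

lemma breg_sum:
  fixes f :: "'n::finite \<Rightarrow> nat \<Rightarrow> 'a::real_inner \<Rightarrow> real"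
  shows "real CARD('n) * shuffle_breg f g xs a P r
     = (\<Sum>j\<in>UNIV. f j (P j r) (xbar_star g xs a P r) - f j (P j r) xs
          - inner (g j (P j r) xs) (xbar_star g xs a P r - xs))"
  by (simp add: shuffle_breg_def Let_def inner_sum_left sum_subtractf right_diff_distrib sum_distrib_left)

lemma pointwise_main:
  fixes W :: "real^'n::finite^'n" and f :: "'n \<Rightarrow> nat \<Rightarrow> 'a::euclidean_space \<Rightarrow> real"
    and g :: "'n \<Rightarrow> nat \<Rightarrow> 'a \<Rightarrow> 'a" and P :: "'n \<Rightarrow> nat \<Rightarrow> nat" and X :: "'n \<Rightarrow> 'a"
  assumes W: "mixing_matrix W"
    and der: "\<And>i x. (f i (P i r) has_derivative (\<lambda>h. inner (g i (P i r) x) h)) (at x)"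
    and cv: "\<And>i. convex_on UNIV (f i (P i r))"
    and lip: "\<And>i. L-lipschitz_on UNIV (g i (P i r))"
    and L: "0 < L" and a: "0 < a"
    and rho: "0 < rho_w W" "rho_w W < 1"
    and cond: "3 * (rho_w W)\<^sup>2 * (1 + 3 * (rho_w W)\<^sup>2) * a\<^sup>2 * L\<^sup>2 \<le> (1 - (rho_w W)\<^sup>2)\<^sup>2 / 4"
  shows "consensus_err (drr_step W g a P r X)
     \<le> (1 + (rho_w W)\<^sup>2) / 2 * consensus_err X
       + 30 * a\<^sup>2 * real CARD('n) * L\<^sup>2 / (1 - (rho_w W)\<^sup>2) * (norm (agent_avg X - xbar_star g xs a P r))\<^sup>2
       + 15 * real CARD('n) * (rho_w W)\<^sup>2 * a\<^sup>2 / (1 - (rho_w W)\<^sup>2)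
           * ((\<Sum>i\<in>UNIV. (norm (g i (P i r) xs))\<^sup>2) / real CARD('n) + 2 * L * shuffle_breg f g xs a P r)"
proof -
  define s where "s = (rho_w W)\<^sup>2"
  define d where "d = 1 - s"
  define n where "n = real CARD('n)"
  define xb where "xb = agent_avg X"
  define y where "y = xbar_star g xs a P r"
  define G where "G j = g j (P j r) (X j)" for j
  define Cn where "Cn = consensus_err X"
  define Dd where "Dd = (norm (xb - y))\<^sup>2"
  define \<beta> where "\<beta> = shuffle_breg f g xs a P r"
  define Q where "Q = (\<Sum>i\<in>UNIV. (norm (g i (P i r) xs))\<^sup>2)"
  define e where "e = d / (4 * s)"
  define bf where "bf j = f j (P j r) y - f j (P j r) xs - inner (g j (P j r) xs) (y - xs)" for j
  have s0: "0 < s" and s1: "s < 1" using rho unfolding s_def by (auto simp: power_less_one_iff)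
  have d0: "0 < d" using s1 by (simp add: d_def)
  have n0: "0 < n" by (simp add: n_def)
  have e0: "0 < e" using d0 s0 by (simp add: e_def)
  have Cn0: "0 \<le> Cn" by (simp add: Cn_def consensus_err_def sum_nonneg)
  have Dd0: "0 \<le> Dd" by (simp add: Dd_def)
  have Q0: "0 \<le> Q" by (simp add: Q_def sum_nonneg)
  have "consensus_err (drr_step W g a P r X) \<le> s * (\<Sum>j\<in>UNIV. (norm ((X j - xb) - a *\<^sub>R G j))\<^sup>2)"
    using step1[OF W, of g a P r X] by (simp add: s_def xb_def G_def algebra_simps)
  also have "\<dots> \<le> s * (\<Sum>j\<in>UNIV. (1 + e) * (norm (X j - xb))\<^sup>2 + (1 + 1 / e) * (a\<^sup>2 * (norm (G j))\<^sup>2))"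
  proof (rule mult_left_mono[OF sum_mono])
    fix j
    have "(norm (a *\<^sub>R G j))\<^sup>2 = a\<^sup>2 * (norm (G j))\<^sup>2" by (simp add: power_mult_distrib)
    then show "(norm ((X j - xb) - a *\<^sub>R G j))\<^sup>2 \<le> (1 + e) * (norm (X j - xb))\<^sup>2 + (1 + 1 / e) * (a\<^sup>2 * (norm (G j))\<^sup>2)"
      using young[OF e0, of "X j - xb" "a *\<^sub>R G j"] by simp
  qed (use s0 in simp)
  also have "\<dots> = s * (1 + e) * Cn + s * (1 + 1 / e) * a\<^sup>2 * (\<Sum>j\<in>UNIV. (norm (G j))\<^sup>2)"
    by (simp add: Cn_def consensus_err_def xb_def sum.distrib sum_distrib_left algebra_simps)
  finally have S1: "consensus_err (drr_step W g a P r X) \<le> s * (1 + e) * Cn + s * (1 + 1 / e) * a\<^sup>2 * (\<Sum>j\<in>UNIV. (norm (G j))\<^sup>2)" .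
  have "(\<Sum>j\<in>UNIV. (norm (G j))\<^sup>2) \<le> (\<Sum>j\<in>UNIV.
      3 * (norm (g j (P j r) (X j) - g j (P j r) xb))\<^sup>2 + 15/2 * (norm (g j (P j r) xb - g j (P j r) y))\<^sup>2
      + 15/4 * (norm (g j (P j r) y - g j (P j r) xs))\<^sup>2 + 15/4 * (norm (g j (P j r) xs))\<^sup>2)"
  proof (rule sum_mono)
    fix j
    have "G j = (g j (P j r) (X j) - g j (P j r) xb) + (g j (P j r) xb - g j (P j r) y)
        + (g j (P j r) y - g j (P j r) xs) + g j (P j r) xs" by (simp add: G_def)
    then show "(norm (G j))\<^sup>2 \<le> 3 * (norm (g j (P j r) (X j) - g j (P j r) xb))\<^sup>2 + 15/2 * (norm (g j (P j r) xb - g j (P j r) y))\<^sup>2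
      + 15/4 * (norm (g j (P j r) y - g j (P j r) xs))\<^sup>2 + 15/4 * (norm (g j (P j r) xs))\<^sup>2"
      using four_sq by metis
  qed
  also have "\<dots> \<le> (\<Sum>j\<in>UNIV.
      3 * (L\<^sup>2 * (norm (X j - xb))\<^sup>2) + 15/2 * (L\<^sup>2 * Dd)
      + 15/4 * (2 * L * (f j (P j r) y - f j (P j r) xs - inner (g j (P j r) xs) (y - xs)))
      + 15/4 * (norm (g j (P j r) xs))\<^sup>2)"
  proof (rule sum_mono)
    fix j
    have 1: "(norm (g j (P j r) (X j) - g j (P j r) xb))\<^sup>2 \<le> L\<^sup>2 * (norm (X j - xb))\<^sup>2"
      using lip_sq[OF lip] L by simp
    have 2: "(norm (g j (P j r) xb - g j (P j r) y))\<^sup>2 \<le> L\<^sup>2 * Dd"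
      using lip_sq[OF lip] L by (simp add: Dd_def)
    have 3: "(norm (g j (P j r) y - g j (P j r) xs))\<^sup>2
        \<le> 2 * L * (f j (P j r) y - f j (P j r) xs - inner (g j (P j r) xs) (y - xs))"
      by (rule cocoercive[OF der cv lip L])
    show "3 * (norm (g j (P j r) (X j) - g j (P j r) xb))\<^sup>2 + 15/2 * (norm (g j (P j r) xb - g j (P j r) y))\<^sup>2
      + 15/4 * (norm (g j (P j r) y - g j (P j r) xs))\<^sup>2 + 15/4 * (norm (g j (P j r) xs))\<^sup>2
      \<le> 3 * (L\<^sup>2 * (norm (X j - xb))\<^sup>2) + 15/2 * (L\<^sup>2 * Dd)
      + 15/4 * (2 * L * (f j (P j r) y - f j (P j r) xs - inner (g j (P j r) xs) (y - xs)))
      + 15/4 * (norm (g j (P j r) xs))\<^sup>2"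
      using 1 2 3 by linarith
  qed
  also have "\<dots> = (\<Sum>j\<in>UNIV. 3 * (L\<^sup>2 * (norm (X j - xb))\<^sup>2)) + (\<Sum>j::'n\<in>UNIV. 15/2 * (L\<^sup>2 * Dd))
      + (\<Sum>j\<in>UNIV. 15/4 * (2 * L * bf j)) + (\<Sum>j\<in>UNIV. 15/4 * (norm (g j (P j r) xs))\<^sup>2)"
    unfolding bf_def by (simp only: sum.distrib)
  also have "\<dots> = 3 * L\<^sup>2 * Cn + 15/2 * n * L\<^sup>2 * Dd + 15/2 * L * (\<Sum>j\<in>UNIV. bf j) + 15/4 * Q"
  proof -
    have "(\<Sum>j\<in>UNIV. 3 * (L\<^sup>2 * (norm (X j - xb))\<^sup>2)) = 3 * L\<^sup>2 * Cn"
      by (simp add: Cn_def consensus_err_def xb_def sum_distrib_left mult.assoc)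
    moreover have "(\<Sum>j::'n\<in>UNIV. 15/2 * (L\<^sup>2 * Dd)) = 15/2 * n * L\<^sup>2 * Dd" by (simp add: n_def)
    moreover have "(\<Sum>j\<in>UNIV. 15/4 * (2 * L * bf j)) = 15/2 * L * (\<Sum>j\<in>UNIV. bf j)"
      by (simp add: sum_distrib_left mult.assoc)
    moreover have "(\<Sum>j\<in>UNIV. 15/4 * (norm (g j (P j r) xs))\<^sup>2) = 15/4 * Q"
      by (simp add: Q_def sum_distrib_left mult.assoc)
    ultimately show ?thesis by linarith
  qed
  also have "(\<Sum>j\<in>UNIV. bf j) = n * \<beta>"
    unfolding bf_def by (simp add: breg_sum[of f g xs a P r, folded \<beta>_def y_def n_def])
  finally have S2: "(\<Sum>j\<in>UNIV. (norm (G j))\<^sup>2) \<le> 3 * L\<^sup>2 * Cn + 15/2 * n * L\<^sup>2 * Dd + 15/2 * L * (n * \<beta>) + 15/4 * Q" .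
  have \<beta>0: "0 \<le> n * \<beta>"
  proof -
    have "0 \<le> (\<Sum>j\<in>UNIV. (norm (g j (P j r) y - g j (P j r) xs))\<^sup>2)" by (simp add: sum_nonneg)
    also have "\<dots> \<le> (\<Sum>j\<in>UNIV. 2 * L * (f j (P j r) y - f j (P j r) xs - inner (g j (P j r) xs) (y - xs)))"
      by (intro sum_mono cocoercive[OF der cv lip L])
    also have "\<dots> = 2 * L * (n * \<beta>)"
      by (simp add: breg_sum[of f g xs a P r, folded \<beta>_def y_def n_def] sum_distrib_left)
    finally show ?thesis using L by (simp add: zero_le_mult_iff)
  qed
  define K where "K = s * (1 + 3 * s) / d"
  have eA: "s * (1 + e) = (1 + 3 * s) / 4" using s0 d0 by (simp add: e_def d_def field_simps)
  have eB: "s * (1 + 1 / e) = K" using s0 d0 by (simp add: e_def K_def d_def field_simps)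
  have K0: "0 \<le> K" using s0 d0 by (simp add: K_def)
  have S3: "s * (1 + 1 / e) * a\<^sup>2 * (\<Sum>j\<in>UNIV. (norm (G j))\<^sup>2)
      \<le> s * (1 + 1 / e) * a\<^sup>2 * (3 * L\<^sup>2 * Cn + 15/2 * n * L\<^sup>2 * Dd + 15/2 * L * (n * \<beta>) + 15/4 * Q)"
    by (rule mult_left_mono[OF S2]) (use s0 e0 in simp)
  have "consensus_err (drr_step W g a P r X)
      \<le> (1 + 3 * s) / 4 * Cn + K * a\<^sup>2 * (3 * L\<^sup>2 * Cn + 15/2 * n * L\<^sup>2 * Dd + 15/2 * L * (n * \<beta>) + 15/4 * Q)"
    using S1 S3 unfolding eA eB by linarith
  also have "\<dots> = ((1 + 3 * s) / 4 + 3 * K * a\<^sup>2 * L\<^sup>2) * Cn + (15/2 * K * a\<^sup>2 * n * L\<^sup>2) * Dd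
       + (15/2 * K * a\<^sup>2 * L) * (n * \<beta>) + (15/4 * K * a\<^sup>2) * Q"
    by (simp add: algebra_simps)
  also have "\<dots> \<le> ((1 + s) / 2) * Cn + (30 * a\<^sup>2 * n * L\<^sup>2 / d) * Dd
       + (30 * s * a\<^sup>2 * L / d) * (n * \<beta>) + (15 * s * a\<^sup>2 / d) * Q"
  proof -
    have ss: "s * s \<le> 1" using s0 s1 by (simp add: mult_le_one)
    have p1: "15/2 * s * (1 + 3 * s) \<le> 30"
    proof -
      have "15/2 * s * (1 + 3 * s) = 15/2 * s + 45/2 * (s * s)" by algebra
      then show ?thesis using ss s1 by linarith
    qed
    have p2: "15/2 * (1 + 3 * s) \<le> 30" using s1 by (simp add: ring_distribs)
    have p3: "15/4 * (1 + 3 * s) \<le> 15" using s1 by (simp add: ring_distribs)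
    have c1: "(1 + 3 * s) / 4 + 3 * K * a\<^sup>2 * L\<^sup>2 \<le> (1 + s) / 2"
    proof -
      have "3 * K * a\<^sup>2 * L\<^sup>2 = 3 * s * (1 + 3 * s) * a\<^sup>2 * L\<^sup>2 / d" by (simp add: K_def)
      also have "\<dots> \<le> (d\<^sup>2 / 4) / d"
        using cond d0 unfolding s_def d_def by (intro divide_right_mono) auto
      also have "\<dots> = d / 4" using d0 by (simp add: power2_eq_square)
      finally have "3 * K * a\<^sup>2 * L\<^sup>2 \<le> d / 4" .
      then show ?thesis unfolding d_def by (simp add: field_simps)
    qed
    have c2: "15/2 * K * a\<^sup>2 * n * L\<^sup>2 \<le> 30 * a\<^sup>2 * n * L\<^sup>2 / d"
    proof -
      have "15/2 * K * a\<^sup>2 * n * L\<^sup>2 = (15/2 * s * (1 + 3 * s)) * (a\<^sup>2 * n * L\<^sup>2 / d)" by (simp add: K_def)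
      also have "\<dots> \<le> 30 * (a\<^sup>2 * n * L\<^sup>2 / d)"
        by (rule mult_right_mono[OF p1]) (use d0 n0 in simp)
      finally show ?thesis by simp
    qed
    have c3: "15/2 * K * a\<^sup>2 * L \<le> 30 * s * a\<^sup>2 * L / d"
    proof -
      have "15/2 * K * a\<^sup>2 * L = (15/2 * (1 + 3 * s)) * (s * a\<^sup>2 * L / d)" by (simp add: K_def)
      also have "\<dots> \<le> 30 * (s * a\<^sup>2 * L / d)"
        by (rule mult_right_mono[OF p2]) (use d0 s0 L in simp)
      finally show ?thesis by simp
    qed
    have c4: "15/4 * K * a\<^sup>2 \<le> 15 * s * a\<^sup>2 / d"
    proof -
      have "15/4 * K * a\<^sup>2 = (15/4 * (1 + 3 * s)) * (s * a\<^sup>2 / d)" by (simp add: K_def)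
      also have "\<dots> \<le> 15 * (s * a\<^sup>2 / d)"
        by (rule mult_right_mono[OF p3]) (use d0 s0 in simp)
      finally show ?thesis by simp
    qed
    show ?thesis
      using mult_right_mono[OF c1 Cn0] mult_right_mono[OF c2 Dd0] mult_right_mono[OF c3 \<beta>0]
        mult_right_mono[OF c4 Q0] by linarith
  qed
  also have "\<dots> = ((1 + s) / 2) * Cn + (30 * a\<^sup>2 * n * L\<^sup>2 / d) * Dd
       + 15 * n * s * a\<^sup>2 / d * (Q / n + 2 * L * \<beta>)"
    using n0 d0 by (simp add: field_simps)
  finally show ?thesis
    unfolding s_def d_def n_def Cn_def Dd_def xb_def y_def Q_def \<beta>_def by (simp add: mult.commute mult.left_commute)
qed




lemma sconv_convex:
  assumes "strongly_convex_on \<mu> f" "0 \<le> \<mu>"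
  shows "convex_on UNIV f"
  unfolding convex_on_def
proof (intro conjI ballI allI impI)
  fix x y :: 'a and u v :: real assume uv: "0 \<le> u" "0 \<le> v" "u + v = 1"
  have v: "v = 1 - u" using uv by simp
  have "f (u *\<^sub>R x + (1 - u) *\<^sub>R y) \<le> u * f x + (1 - u) * f y - \<mu> / 2 * u * (1 - u) * (norm (x - y))\<^sup>2"
    using assms(1) uv unfolding strongly_convex_on_def by auto
  moreover have "0 \<le> \<mu> / 2 * u * (1 - u) * (norm (x - y))\<^sup>2" using assms(2) uv by (simp add: v)
  ultimately show "f (u *\<^sub>R x + v *\<^sub>R y) \<le> u * f x + v * f y" unfolding v by linarith
qed simp

lemma Exp_sum:
  "Exp m t X = (\<Sum>w\<in>(perm_space m t :: (nat \<Rightarrow> 'n::finite \<Rightarrow> nat \<Rightarrow> nat) set). X w)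
     / real (card (perm_space m t :: (nat \<Rightarrow> 'n::finite \<Rightarrow> nat \<Rightarrow> nat) set))"
  unfolding Exp_def by (rule integral_pmf_of_set[OF perm_space_nonempty perm_space_finite])


theorem lemma7:
  fixes W :: "real ^'n::finite ^'n"
    and f :: "'n \<Rightarrow> nat \<Rightarrow> 'a::euclidean_space \<Rightarrow> real"
    and g :: "'n \<Rightarrow> nat \<Rightarrow> 'a \<Rightarrow> 'a"
    and m :: nat and \<mu> L :: real
    and x0 :: "'n \<Rightarrow> 'a" and xs :: 'a and \<alpha> :: "nat \<Rightarrow> real"
  assumes m_pos: "1 \<le> m"
    and W: "mixing_matrix W"
    and grad: "\<And>i l x. l < m \<Longrightarrow> (f i l has_derivative (\<lambda>h. inner (g i l x) h)) (at x)"
    and sconv: "\<And>i l. l < m \<Longrightarrow> strongly_convex_on \<mu> (f i l)"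
    and lip: "\<And>i l. l < m \<Longrightarrow> L-lipschitz_on UNIV (g i l)"
    and mu_pos: "0 < \<mu>" and mu_le_L: "\<mu> \<le> L"
    and xs_min: "\<And>y. (1 / real CARD('n)) * (\<Sum>i\<in>UNIV. (1 / real m) * (\<Sum>l<m. f i l xs))
                     \<le> (1 / real CARD('n)) * (\<Sum>i\<in>UNIV. (1 / real m) * (\<Sum>l<m. f i l y))"
    and alpha_pos: "\<And>t. 0 < \<alpha> t"
    and alpha_le: "\<And>t. rho_w W \<noteq> 0 \<Longrightarrow>
        \<alpha> t \<le> sqrt ((2 - (rho_w W)\<^sup>2) / (24 * (rho_w W)\<^sup>2 * (5 - (rho_w W)\<^sup>2))) * (1 - (rho_w W)\<^sup>2) / L"
    and ell: "r < m"
  shows "Exp m t (\<lambda>\<omega>. consensus_err (drr_iter W g m \<alpha> x0 \<omega> t (Suc r)))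
     \<le> (1 + (rho_w W)\<^sup>2) / 2 * Exp m t (\<lambda>\<omega>. consensus_err (drr_iter W g m \<alpha> x0 \<omega> t r))
       + 30 * (\<alpha> t)\<^sup>2 * real CARD('n) * L\<^sup>2 / (1 - (rho_w W)\<^sup>2)
           * Exp m t (\<lambda>\<omega>. (norm (agent_avg (drr_iter W g m \<alpha> x0 \<omega> t r) - xbar_star g xs (\<alpha> t) (\<omega> t) r))\<^sup>2)
       + 15 * real CARD('n) * (rho_w W)\<^sup>2 * (\<alpha> t)\<^sup>2 / (1 - (rho_w W)\<^sup>2)
           * (sigma_star_sq g m xs + 2 * L * sigma_shuffle_sq f g m xs \<alpha> t)"
proof -
  define \<rho> where "\<rho> = rho_w W"
  define a where "a = \<alpha> t"
  define n where "n = real CARD('n)"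
  define S where "S = (perm_space m t :: (nat \<Rightarrow> 'n \<Rightarrow> nat \<Rightarrow> nat) set)"
  define N where "N = real (card S)"
  define Xr where "Xr w = drr_iter W g m \<alpha> x0 w t r" for w
  define LHS where "LHS w = consensus_err (drr_iter W g m \<alpha> x0 w t (Suc r))" for w
  define C where "C w = consensus_err (Xr w)" for w
  define D where "D w = (norm (agent_avg (Xr w) - xbar_star g xs a (w t) r))\<^sup>2" for w
  define Q where "Q w = (\<Sum>i\<in>UNIV. (norm (g i (w t i r) xs))\<^sup>2)" for w
  define B where "B w = shuffle_breg f g xs a (w t) r" for w
  have fS: "finite S" unfolding S_def by (rule perm_space_finite)
  have neS: "S \<noteq> {}" unfolding S_def by (rule perm_space_nonempty)
  have N0: "0 < N" unfolding N_def using fS neS by (simp add: card_gt_0_iff)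
  have n0: "0 < n" by (simp add: n_def)
  have a0: "0 < a" by (simp add: a_def alpha_pos)
  have L0: "0 < L" using mu_pos mu_le_L by simp
  have Exp: "Exp m t X = sum X S / N" for X unfolding Exp_sum S_def N_def ..
  have LHS_step: "drr_iter W g m \<alpha> x0 w t (Suc r) = drr_step W g a (w t) r (Xr w)" for w
    by (simp add: drr_iter_def Xr_def a_def)
  have rho0: "0 \<le> \<rho>" and rho1: "\<rho> \<le> 1" using rho_bounds[OF W] by (auto simp: \<rho>_def)
  have C0: "0 \<le> C w" for w by (simp add: C_def consensus_err_def sum_nonneg)
  have D0: "0 \<le> D w" for w by (simp add: D_def)
  have permr: "w t i r < m" if "w \<in> S" for w i
  proof -
    have "w t i permutes {..<m}" using that unfolding S_def by (rule perm_space_permutes)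
    then show ?thesis using permutes_in_image[of "w t i" "{..<m}" r] ell by simp
  qed
  have G: "?thesis = (sum LHS S / N \<le> (1 + \<rho>\<^sup>2) / 2 * (sum C S / N) + 30 * a\<^sup>2 * n * L\<^sup>2 / (1 - \<rho>\<^sup>2) * (sum D S / N)
      + 15 * n * \<rho>\<^sup>2 * a\<^sup>2 / (1 - \<rho>\<^sup>2) * (sigma_star_sq g m xs + 2 * L * sigma_shuffle_sq f g m xs \<alpha> t))"
    unfolding Exp LHS_def[symmetric] Xr_def[symmetric] C_def[symmetric] a_def[symmetric]
        D_def[symmetric] \<rho>_def[symmetric] n_def ..
  have "sum LHS S / N \<le> (1 + \<rho>\<^sup>2) / 2 * (sum C S / N) + 30 * a\<^sup>2 * n * L\<^sup>2 / (1 - \<rho>\<^sup>2) * (sum D S / N)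
      + 15 * n * \<rho>\<^sup>2 * a\<^sup>2 / (1 - \<rho>\<^sup>2) * (sigma_star_sq g m xs + 2 * L * sigma_shuffle_sq f g m xs \<alpha> t)"
  proof (cases "\<rho> = 0")
    case True
    have "LHS w \<le> 0" for w
      using step1[OF W, of g a "w t" r "Xr w"] True unfolding LHS_def LHS_step \<rho>_def by simp
    then have "sum LHS S / N \<le> 0" using N0 by (simp add: divide_nonpos_pos sum_nonpos)
    moreover have "0 \<le> sum C S / N" using N0 C0 by (simp add: sum_nonneg)
    moreover have "0 \<le> sum D S / N" using N0 D0 by (simp add: sum_nonneg)
    moreover have "0 \<le> 30 * a\<^sup>2 * n * L\<^sup>2 / (1 - \<rho>\<^sup>2) * (sum D S / N)"
      using calculation(3) n0 True by (intro mult_nonneg_nonneg) auto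
    moreover have "0 \<le> (1 + \<rho>\<^sup>2) / 2 * (sum C S / N)" using calculation(2) True by simp
    ultimately show ?thesis using True by simp
  next
    case False
    then have rpos: "0 < \<rho>" using rho0 by simp
    have rlt: "\<rho> < 1"
    proof (rule ccontr)
      assume "\<not> \<rho> < 1"
      then have "\<rho> = 1" using rho1 by simp
      then show False using alpha_le[of t] alpha_pos[of t] by (simp add: \<rho>_def)
    qed
    define s where "s = \<rho>\<^sup>2"
    have s0: "0 < s" and s1: "s < 1" using rpos rlt by (auto simp: s_def power_less_one_iff)
    define q where "q = (2 - s) / (24 * s * (5 - s))"
    have q0: "0 \<le> q" using s0 s1 by (simp add: q_def)
    have "a \<le> sqrt q * (1 - s) / L" using alpha_le[of t] False by (simp add: a_def q_def s_def \<rho>_def)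
    then have "a * L \<le> sqrt q * (1 - s)" using L0 by (simp add: field_simps)
    then have "(a * L)\<^sup>2 \<le> (sqrt q * (1 - s))\<^sup>2" using a0 L0 by (intro power_mono) auto
    then have aL: "a\<^sup>2 * L\<^sup>2 \<le> q * (1 - s)\<^sup>2" using q0 by (simp add: power_mult_distrib)
    have "3 * s * (1 + 3 * s) * q = (1 + 3 * s) * (2 - s) / (8 * (5 - s))"
      using s0 s1 by (simp add: q_def field_simps)
    also have "\<dots> \<le> 1 / 4"
    proof -
      have "(1 + 3 * s) * (2 - s) = 2 + 5 * s - 3 * (s * s)" by algebra
      moreover have "0 \<le> s * s" by simp
      ultimately have "(1 + 3 * s) * (2 - s) \<le> 2 * (5 - s)" using s1 by (smt (verit))
      then show ?thesis using s1 by (simp add: field_simps)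
    qed
    finally have qb: "3 * s * (1 + 3 * s) * q \<le> 1 / 4" .
    have cond: "3 * \<rho>\<^sup>2 * (1 + 3 * \<rho>\<^sup>2) * a\<^sup>2 * L\<^sup>2 \<le> (1 - \<rho>\<^sup>2)\<^sup>2 / 4"
    proof -
      have "3 * s * (1 + 3 * s) * (a\<^sup>2 * L\<^sup>2) \<le> 3 * s * (1 + 3 * s) * (q * (1 - s)\<^sup>2)"
        using aL s0 by (intro mult_left_mono) auto
      also have "\<dots> = (3 * s * (1 + 3 * s) * q) * (1 - s)\<^sup>2" by simp
      also have "\<dots> \<le> 1 / 4 * (1 - s)\<^sup>2" using qb by (intro mult_right_mono) auto
      finally show ?thesis by (simp add: s_def mult.assoc)
    qed
    define c0 where "c0 = (1 + \<rho>\<^sup>2) / 2"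
    define c1 where "c1 = 30 * a\<^sup>2 * n * L\<^sup>2 / (1 - \<rho>\<^sup>2)"
    define c2 where "c2 = 15 * n * \<rho>\<^sup>2 * a\<^sup>2 / (1 - \<rho>\<^sup>2)"
    have c2pos: "0 \<le> c2" using s1 n0 by (simp add: c2_def s_def)
    have pw: "LHS w \<le> c0 * C w + c1 * D w + c2 * (Q w / n + 2 * L * B w)" if "w \<in> S" for w
    proof -
      have der: "\<And>i x. (f i (w t i r) has_derivative (\<lambda>h. inner (g i (w t i r) x) h)) (at x)"
        using grad permr[OF that] by blast
      have cv: "\<And>i. convex_on UNIV (f i (w t i r))"
        using sconv_convex sconv permr[OF that] mu_pos by (meson less_imp_le)
      have lp: "\<And>i. L-lipschitz_on UNIV (g i (w t i r))" using lip permr[OF that] by blast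
      show ?thesis
        using pointwise_main[where P="w t" and r=r and f=f and g=g, OF W der cv lp L0 a0 rpos[unfolded \<rho>_def] rlt[unfolded \<rho>_def]
            cond[unfolded \<rho>_def], of "Xr w" xs]
        unfolding LHS_def LHS_step c0_def c1_def c2_def C_def D_def Q_def B_def n_def \<rho>_def
        by simp
    qed
    have "sum LHS S \<le> (\<Sum>w\<in>S. c0 * C w + c1 * D w + c2 * (Q w / n + 2 * L * B w))"
      by (rule sum_mono) (rule pw)
    also have "\<dots> = c0 * sum C S + c1 * sum D S + c2 * (sum Q S / n + 2 * L * sum B S)"
    proof -
      have "(\<Sum>w\<in>S. c0 * C w + c1 * D w + c2 * (Q w / n + 2 * L * B w))
          = (\<Sum>w\<in>S. c0 * C w) + (\<Sum>w\<in>S. c1 * D w) + (\<Sum>w\<in>S. (c2 / n) * Q w) + (\<Sum>w\<in>S. (c2 * 2 * L) * B w)"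
        by (simp only: sum.distrib[symmetric]) (rule sum.cong, simp_all add: algebra_simps)
      also have "\<dots> = c0 * sum C S + c1 * sum D S + (c2 / n) * sum Q S + (c2 * 2 * L) * sum B S"
        by (simp only: sum_distrib_left[symmetric])
      finally show ?thesis by (simp add: algebra_simps)
    qed
    finally have X: "sum LHS S \<le> c0 * sum C S + c1 * sum D S + c2 * (sum Q S / n + 2 * L * sum B S)" .
    have "sum LHS S / N \<le> (c0 * sum C S + c1 * sum D S + c2 * (sum Q S / n + 2 * L * sum B S)) / N"
      using X N0 by (intro divide_right_mono) auto
    also have "\<dots> = c0 * (sum C S / N) + c1 * (sum D S / N) + c2 * ((sum Q S / N) / n + 2 * L * (sum B S / N))"
    proof -
      have Nn: "N \<noteq> 0" "n \<noteq> 0" using N0 n0 by auto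
      show ?thesis using Nn by (simp add: field_simps)
    qed
    finally have main: "sum LHS S / N \<le> c0 * (sum C S / N) + c1 * (sum D S / N) + c2 * ((sum Q S / N) / n + 2 * L * (sum B S / N))" .
    define Z where "Z = (\<Sum>i\<in>UNIV. \<Sum>l<m. (norm (g i l xs))\<^sup>2)"
    have EQ: "(sum Q S / N) / n = sigma_star_sq g m xs"
    proof -
      have "sum Q S = (\<Sum>i\<in>UNIV. \<Sum>w\<in>S. (norm (g i (w t i r) xs))\<^sup>2)"
        unfolding Q_def by (rule sum.swap)
      also have "\<dots> = (\<Sum>i\<in>UNIV. N / real m * (\<Sum>l<m. (norm (g i l xs))\<^sup>2))"
        unfolding N_def S_def by (intro sum.cong refl marg_uniform[OF ell])
      also have "\<dots> = N / real m * Z"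
        unfolding Z_def by (rule sum_distrib_left[symmetric])
      finally have sQ: "sum Q S = N / real m * Z" .
      have sg: "sigma_star_sq g m xs = 1 / (real m * n) * Z" unfolding sigma_star_sq_def Z_def n_def ..
      have m0: "real m \<noteq> 0" using m_pos by simp
      have Nn: "N \<noteq> 0" "n \<noteq> 0" using N0 n0 by auto
      show ?thesis unfolding sQ sg using m0 Nn by (simp add: field_simps)
    qed
    have EB: "sum B S / N \<le> sigma_shuffle_sq f g m xs \<alpha> t"
    proof -
      have e1: "sum B S / N = Exp m t (\<lambda>w. shuffle_breg f g xs (\<alpha> t) (w t) r)"
        unfolding Exp B_def a_def by (rule refl)
      have fin: "finite ((\<lambda>r. Exp m t (\<lambda>\<omega>. shuffle_breg f g xs (\<alpha> t) (\<omega> t) r)) ` {..<m})" by simp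
      have mem: "Exp m t (\<lambda>w. shuffle_breg f g xs (\<alpha> t) (w t) r)
          \<in> (\<lambda>r. Exp m t (\<lambda>\<omega>. shuffle_breg f g xs (\<alpha> t) (\<omega> t) r)) ` {..<m}"
        by (rule imageI) (simp add: ell)
      show ?thesis unfolding e1 sigma_shuffle_sq_def by (rule Max_ge[OF fin mem])
    qed
    have "c2 * (sigma_star_sq g m xs + 2 * L * (sum B S / N)) \<le> c2 * (sigma_star_sq g m xs + 2 * L * sigma_shuffle_sq f g m xs \<alpha> t)"
      using EB L0 c2pos by (intro mult_left_mono add_left_mono) auto
    then have "sum LHS S / N \<le> c0 * (sum C S / N) + c1 * (sum D S / N)
        + c2 * (sigma_star_sq g m xs + 2 * L * sigma_shuffle_sq f g m xs \<alpha> t)"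
      using main unfolding EQ by linarith
    then show ?thesis unfolding c0_def c1_def c2_def by simp
  qed
  then show ?thesis unfolding G .
qed

end
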